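(* Let $(\mathcal G_t)\subseteq(\mathcal F_t)$ be a filtration, $(\rho^n)_{n\ge1}\subset\tilde{\mathcal A}^\circ(\mathcal G_t)$ and $\rho\in\tilde{\mathcal A}^\circ(\mathcal G_t)$ with $$\mathbb P\big(\{\omega:\lim_{n\to\infty}\rho^n_t(\omega)=\rho_t(\omega)\text{ for all }t\in C_\rho(\omega)\cup\{T\}\}\big)=1.$$ Let $\theta$ be an $\mathcal F$-measurable random variable with values in $(0,T]$ and $X$ an $\mathcal F$-measurable random variable with values in $[0,\infty)$ and $\mathbb E[X]<\infty$. Then $$\limsup_{n\to\infty}\mathbb E\Big[\int_{[0,T]}1_{\{t\ge\theta\}}X\,d\rho^n_t\Big]\le\mathbb E\Big[\int_{[0,T]}1_{\{t\ge\theta\}}X\,d\rho_t\Big].$$ If moreover $\mathbb P(\{\omega:\theta(\omega)\in C_\rho(\omega)\text{ or }X(\omega)=0\})=1$, then the limit exists and equality holds.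
   Context: $(\Omega,\mathcal F,\mathbb P)$ complete probability space with filtration $(\mathcal F_t)_{t\in[0,T]}$, $T\in(0,\infty]$. $\tilde{\mathcal A}^\circ(\mathcal G_t)$ is the set of $(\mathcal G_t)$-adapted processes $\rho$ with, for all $\omega$, $t\mapsto\rho_t(\omega)$ càdlàg non-decreasing, $\rho_{0-}=0$ and $\rho_T\le1$. For a càdlàg process $X$, $C_X(\omega)=\{t\in[0,T]:X_{t-}(\omega)=X_t(\omega)\}$. Integrals are pathwise Lebesgue–Stieltjes. *)

theory Defs
  imports "HOL-Probability.Probability"
begin

definition filtration_on :: "'a measure \<Rightarrow> ereal \<Rightarrow> (ereal \<Rightarrow> 'a measure) \<Rightarrow> bool" where
  "filtration_on M T F \<longleftrightarrow>
     (\<forall>t\<in>{0..T}. space (F t) = space M \<and> sets (F t) \<subseteq> sets M) \<and>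
     (\<forall>s\<in>{0..T}. \<forall>t\<in>{0..T}. s \<le> t \<longrightarrow> sets (F s) \<subseteq> sets (F t))"

text \<open>Sample path extended by the convention rho_{0-} = 0 (value 0 before time 0)
  and kept constant after T (so that it carries no mass outside [0,T]).\<close>
definition path_ext :: "ereal \<Rightarrow> (ereal \<Rightarrow> real) \<Rightarrow> ereal \<Rightarrow> real" where
  "path_ext T f t = (if t < 0 then 0 else if t \<le> T then f t else f T)"

text \<open>Left limit X_{t-} of a path; at t = 0 this is the convention value 0.\<close>
definition left_lim :: "ereal \<Rightarrow> (ereal \<Rightarrow> real) \<Rightarrow> ereal \<Rightarrow> real" where
  "left_lim T f t = Lim (at_left t) (path_ext T f)"

definition cont_points :: "ereal \<Rightarrow> (ereal \<Rightarrow> real) \<Rightarrow> ereal set" where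
  "cont_points T f = {t \<in> {0..T}. left_lim T f t = f t}"

text \<open>Lebesgue--Stieltjes measure of a path on ereal: mass F(b) - F(a) on (a,b],
  where F is the extended path (so the mass at 0 is f 0 = f 0 - f(0-)).\<close>
definition ls_measure :: "ereal \<Rightarrow> (ereal \<Rightarrow> real) \<Rightarrow> ereal measure" where
  "ls_measure T f = extend_measure UNIV {(a, b). a \<le> b} (\<lambda>(a, b). {a<..b})
      (\<lambda>(a, b). ennreal (path_ext T f b - path_ext T f a))"

definition ls_int :: "ereal \<Rightarrow> (ereal \<Rightarrow> real) \<Rightarrow> (ereal \<Rightarrow> real) \<Rightarrow> real" where
  "ls_int T f g = (\<integral>t. indicator {0..T} t * g t \<partial>ls_measure T f)"

text \<open>The class tilde-A-circ(G_t): G-adapted, every path cadlag and non-decreasing on [0,T],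
  rho_{0-} = 0 (built into path_ext; together with monotonicity this forces rho_0 >= 0),
  and rho_T <= 1.\<close>
definition A_circ :: "'a measure \<Rightarrow> ereal \<Rightarrow> (ereal \<Rightarrow> 'a measure) \<Rightarrow> (ereal \<Rightarrow> 'a \<Rightarrow> real) \<Rightarrow> bool" where
  "A_circ M T G \<rho> \<longleftrightarrow>
     (\<forall>t\<in>{0..T}. \<rho> t \<in> borel_measurable (G t)) \<and>
     (\<forall>\<omega>. mono_on {0..T} (\<lambda>t. \<rho> t \<omega>) \<and> 0 \<le> \<rho> 0 \<omega> \<and> \<rho> T \<omega> \<le> 1 \<and>
        (\<forall>t\<in>{0..<T}. ((\<lambda>s. \<rho> s \<omega>) \<longlongrightarrow> \<rho> t \<omega>) (at_right t)) \<and>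
        (\<forall>t\<in>{0<..T}. \<exists>l. ((\<lambda>s. \<rho> s \<omega>) \<longlongrightarrow> l) (at_left t)))"

end

theory Submission imports Defs begin

definition goodpath :: "ereal \<Rightarrow> (ereal \<Rightarrow> real) \<Rightarrow> bool" where
 "goodpath T f \<longleftrightarrow> mono_on {0..T} f \<and> 0 \<le> f 0 \<and> f T \<le> 1 \<and>
    (\<forall>t\<in>{0..<T}. (f \<longlongrightarrow> f t) (at_right t)) \<and> (\<forall>t\<in>{0<..T}. \<exists>l. (f \<longlongrightarrow> l) (at_left t))"

lemma A_circ_goodpath: "A_circ M T G \<rho> \<Longrightarrow> goodpath T (\<lambda>s. \<rho> s \<omega>)"
  by (simp add: A_circ_def goodpath_def)

lemma at_left_ereal_nontriv: "(0::ereal) < \<theta> \<Longrightarrow> at_left \<theta> \<noteq> bot"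
proof
  assume a: "0 < \<theta>" "at_left \<theta> = bot"
  have "eventually (\<lambda>_. False) (at_left \<theta>)" using a(2) by simp
  hence "\<exists>b<\<theta>. \<forall>y>b. y < \<theta> \<longrightarrow> False" by (subst (asm) eventually_at_left[OF a(1)])
  then obtain b where b: "b<\<theta>" "\<forall>y>b. y < \<theta> \<longrightarrow> False" by blast
  obtain z where "b < z" "z < \<theta>" using dense[OF b(1)] by blast
  then show False using b(2) by blast
qed

lemma at_right_ereal_nontriv: "(t::ereal) < \<infinity> \<Longrightarrow> at_right t \<noteq> bot"
proof
  assume a: "t < \<infinity>" "at_right t = bot"
  have "eventually (\<lambda>_. False) (at_right t)" using a(2) by simp
  hence "\<exists>b>t. \<forall>y>t. y < b \<longrightarrow> False" by (subst (asm) eventually_at_right[OF a(1)])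
  then obtain b where b: "b>t" "\<forall>y>t. y < b \<longrightarrow> False" by blast
  obtain z where "t < z" "z < b" using dense[OF b(1)] by blast
  then show False using b(2) by blast
qed

lemma ev_right_gt: "eventually (\<lambda>s. t < s) (at_right (t::ereal))"
  by (simp add: eventually_at_filter)

lemma ev_left_lt: "eventually (\<lambda>s. s < t) (at_left (t::ereal))"
  by (simp add: eventually_at_filter)

lemma ex_seq_left:
  assumes th: "(0::ereal) < \<theta>"
  shows "\<exists>s. incseq s \<and> (\<forall>k. 0 \<le> s k \<and> s k < \<theta>) \<and> s \<longlonglongrightarrow> \<theta>"
proof (cases \<theta>)
  case (real r)
  then have r: "0 < r" using th by simp
  define s where "s k = ereal (r - r / real (Suc k))" for k
  have "incseq s" unfolding s_def incseq_def
    using r by (auto intro!: divide_left_mono simp: field_simps)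
  moreover have "\<forall>k. 0 \<le> s k \<and> s k < \<theta>" unfolding s_def real
    using r by (auto simp: field_simps)
  moreover have "(\<lambda>k. r - r / real (Suc k)) \<longlonglongrightarrow> r - 0"
    by (intro tendsto_intros) (use LIMSEQ_inverse_real_of_nat in \<open>simp add: divide_inverse tendsto_mult_right_zero\<close>)
  then have "s \<longlonglongrightarrow> \<theta>" unfolding s_def real by (intro tendsto_ereal) simp
  ultimately show ?thesis by blast
next
  case PInf
  define s where "s k = ereal (real k)" for k
  have "incseq s" unfolding s_def incseq_def by auto
  moreover have "\<forall>k. 0 \<le> s k \<and> s k < \<theta>" unfolding s_def PInf by auto
  moreover have "s \<longlonglongrightarrow> \<theta>" unfolding PInf tendsto_PInfty
  proof
    fix r :: real
    obtain n :: nat where "r < real n" using reals_Archimedean2 by blast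
    then show "eventually (\<lambda>k. ereal r < s k) sequentially"
      unfolding s_def eventually_sequentially by (intro exI[of _ n]) auto
  qed
  ultimately show ?thesis by blast
next
  case MInf then show ?thesis using th by simp
qed

context
  fixes T :: ereal and f :: "ereal \<Rightarrow> real"
  assumes gp: "goodpath T f" and T0: "0 < T"
begin

lemma gp_mono: "x \<in> {0..T} \<Longrightarrow> y \<in> {0..T} \<Longrightarrow> x \<le> y \<Longrightarrow> f x \<le> f y"
  using gp unfolding goodpath_def mono_on_def by blast

lemma gp_nonneg: "x \<in> {0..T} \<Longrightarrow> 0 \<le> f x"
proof -
  assume x: "x \<in> {0..T}"
  have "f 0 \<le> f x" using gp_mono[of 0 x] T0 x by auto
  moreover have "0 \<le> f 0" using gp unfolding goodpath_def by auto
  ultimately show ?thesis by linarith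
qed

lemma gp_leT: "x \<in> {0..T} \<Longrightarrow> f x \<le> f T"
  using gp_mono[of x T] T0 by auto

lemma gp_T1: "f T \<le> 1" using gp unfolding goodpath_def by auto

lemma pe_mono: "x \<le> y \<Longrightarrow> path_ext T f x \<le> path_ext T f y"
proof -
  assume xy: "x \<le> y"
  have fT: "0 \<le> f T" using gp_nonneg[of T] T0 by simp
  consider (a) "y < 0" | (b) "0 \<le> y" "y \<le> T" | (c) "T < y" by force
  then show ?thesis
  proof cases
    case a
    then have "x < 0" using xy by simp
    then show ?thesis using a by (simp add: path_ext_def)
  next
    case b
    show ?thesis
    proof (cases "x < 0")
      case True then show ?thesis using b gp_nonneg[of y] by (simp add: path_ext_def)
    next
      case False
      have "x \<le> T" using xy b(2) by (rule order_trans)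
      moreover have "\<not> y < 0" using b by (simp add: not_less)
      ultimately show ?thesis using False b xy gp_mono[of x y] by (simp add: path_ext_def)
    qed
  next
    case c
    show ?thesis
    proof (cases "x < 0")
      case True then show ?thesis using c fT T0 by (simp add: path_ext_def)
    next
      case False
      have y1: "\<not> y \<le> T" "\<not> y < 0" using c T0 by (simp_all add: not_le not_less)
      show ?thesis using y1 False c gp_leT[of x] T0 by (simp add: path_ext_def)
    qed
  qed
qed

lemma pe_nonneg: "0 \<le> path_ext T f x"
  using gp_nonneg[of x] gp_nonneg[of T] T0 by (auto simp: path_ext_def)

lemma pe_le: "path_ext T f x \<le> f T"
  using gp_leT[of x] T0 gp_nonneg[of T] by (auto simp: path_ext_def)

lemma pe_top: "path_ext T f \<infinity> = f T"
  unfolding path_ext_def using T0 by auto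

lemma pe_rcont: "(path_ext T f \<longlongrightarrow> path_ext T f t) (at_right t)"
proof (cases "t < 0")
  case True
  have "eventually (\<lambda>s. path_ext T f s = 0) (at_right t)"
    using True by (intro eventually_at_rightI[of t 0]) (auto simp: path_ext_def)
  then show ?thesis using True by (simp add: path_ext_def tendsto_eventually)
next
  case False
  show ?thesis
  proof (cases "t < T")
    case True
    have ev: "eventually (\<lambda>s. path_ext T f s = f s) (at_right t)"
      using True False by (intro eventually_at_rightI[of t T]) (auto simp: path_ext_def)
    have "(f \<longlongrightarrow> f t) (at_right t)" using gp True False unfolding goodpath_def by auto
    then have "(path_ext T f \<longlongrightarrow> f t) (at_right t)" using tendsto_cong[OF ev] by simp
    moreover have "path_ext T f t = f t" using True False by (simp add: path_ext_def less_imp_le)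
    ultimately show ?thesis by simp
  next
    case F2: False
    have "eventually (\<lambda>s. path_ext T f s = f T) (at_right t)"
      by (rule eventually_mono[OF ev_right_gt]) (use F2 T0 in \<open>auto simp: path_ext_def\<close>)
    then have "(path_ext T f \<longlongrightarrow> f T) (at_right t)" by (rule tendsto_eventually)
    moreover have "path_ext T f t = f T" using F2 False T0 by (auto simp: path_ext_def)
    ultimately show ?thesis by simp
  qed
qed

lemma pe_eq: "0 \<le> s \<Longrightarrow> s \<le> T \<Longrightarrow> path_ext T f s = f s"
  by (simp add: path_ext_def not_less)

lemma ll_tendsto:
  assumes th: "0 < \<theta>" "\<theta> \<le> T"
  shows "(path_ext T f \<longlongrightarrow> left_lim T f \<theta>) (at_left \<theta>)"
proof -
  have "\<theta> \<in> {0<..T}" using th by simp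
  then obtain l where l: "(f \<longlongrightarrow> l) (at_left \<theta>)" using gp unfolding goodpath_def by blast
  have ev: "eventually (\<lambda>s. path_ext T f s = f s) (at_left \<theta>)"
  proof (rule eventually_at_leftI[of 0 \<theta>])
    fix s assume "s \<in> {0<..<\<theta>}"
    then have "0 \<le> s" "s \<le> T" using th by auto
    then show "path_ext T f s = f s" by (rule pe_eq)
  qed (use th in auto)
  have "(path_ext T f \<longlongrightarrow> l) (at_left \<theta>)" using tendsto_cong[OF ev] l by simp
  moreover then have "left_lim T f \<theta> = l" unfolding left_lim_def
    by (intro tendsto_Lim) (use at_left_ereal_nontriv[OF th(1)] in auto)
  ultimately show ?thesis by simp
qed

lemma ll_le:
  assumes th: "0 < \<theta>" "\<theta> \<le> T"
  shows "left_lim T f \<theta> \<le> f \<theta>"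
proof (rule tendsto_upperbound[OF ll_tendsto[OF th]])
  show "eventually (\<lambda>s. path_ext T f s \<le> f \<theta>) (at_left \<theta>)"
  proof (rule eventually_mono[OF ev_left_lt])
    fix s assume "s < \<theta>"
    then have "path_ext T f s \<le> path_ext T f \<theta>" by (intro pe_mono) simp
    also have "\<dots> = f \<theta>" using th by (intro pe_eq) auto
    finally show "path_ext T f s \<le> f \<theta>" .
  qed
qed (use at_left_ereal_nontriv[OF th(1)] in auto)

lemma ll_ge:
  assumes th: "0 < \<theta>" "\<theta> \<le> T" and s: "0 \<le> s" "s < \<theta>"
  shows "f s \<le> left_lim T f \<theta>"
proof (rule tendsto_lowerbound[OF ll_tendsto[OF th]])
  show "eventually (\<lambda>u. f s \<le> path_ext T f u) (at_left \<theta>)"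
  proof (rule eventually_at_leftI[of s \<theta>])
    fix u assume "u \<in> {s<..<\<theta>}"
    then have "path_ext T f s \<le> path_ext T f u" by (intro pe_mono less_imp_le) simp
    moreover have "path_ext T f s = f s" using s th by (intro pe_eq) auto
    ultimately show "f s \<le> path_ext T f u" by simp
  qed (use s in auto)
qed (use at_left_ereal_nontriv[OF th(1)] in auto)

lemma ll_nonneg:
  assumes th: "0 < \<theta>" "\<theta> \<le> T"
  shows "0 \<le> left_lim T f \<theta>"
proof -
  have "0 \<le> f 0" using gp_nonneg[of 0] T0 by (simp add: less_imp_le)
  also have "f 0 \<le> left_lim T f \<theta>" using ll_ge[OF th, of 0] th by simp
  finally show ?thesis .
qed

lemma Q_le_iff:
  assumes u: "0 < u" "u \<le> f T"
  shows "Inf {t. u \<le> path_ext T f t} \<le> b \<longleftrightarrow> u \<le> path_ext T f b"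
proof
  assume "u \<le> path_ext T f b"
  then show "Inf {t. u \<le> path_ext T f t} \<le> b" by (intro Inf_lower) simp
next
  define q where "q = Inf {t. u \<le> path_ext T f t}"
  assume qb: "Inf {t. u \<le> path_ext T f t} \<le> b"
  have "u \<le> path_ext T f q"
  proof (cases "q = \<infinity>")
    case True then show ?thesis using u pe_top by simp
  next
    case False
    then have q: "q < \<infinity>" by (simp add: less_top)
    show ?thesis
    proof (rule tendsto_lowerbound[OF pe_rcont[of q]])
      show "eventually (\<lambda>s. u \<le> path_ext T f s) (at_right q)"
      proof (rule eventually_mono[OF ev_right_gt])
        fix s assume "q < s"
        then obtain t where t: "u \<le> path_ext T f t" "t < s" unfolding q_def Inf_less_iff by auto
        then have "path_ext T f t \<le> path_ext T f s" by (intro pe_mono less_imp_le)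
        then show "u \<le> path_ext T f s" using t by simp
      qed
    qed (use at_right_ereal_nontriv[OF q] in auto)
  qed
  also have "\<dots> \<le> path_ext T f b" using qb by (intro pe_mono) (simp add: q_def)
  finally show "u \<le> path_ext T f b" .
qed

definition Qf :: "real \<Rightarrow> ereal" where
  "Qf u = (if u \<in> {0<..f T} then Inf {t. u \<le> path_ext T f t} else -\<infinity>)"

lemma Qf_meas: "Qf \<in> borel_measurable borel"
proof (rule borel_measurableI_le)
  fix y
  have "{x \<in> space borel. Qf x \<le> y} = - {0<..f T} \<union> ({0<..f T} \<inter> {..path_ext T f y})"
    using Q_le_iff by (auto simp: Qf_def)
  also have "\<dots> \<in> sets borel" by auto
  finally show "{x \<in> space borel. Qf x \<le> y} \<in> sets borel" .
qed

definition Nf :: "ereal measure" where "Nf = distr lborel borel Qf"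

lemma Nf_Ioc:
  assumes ab: "a \<le> b"
  shows "emeasure Nf {a<..b} = ennreal (path_ext T f b - path_ext T f a)"
proof -
  have pre: "Qf -` {a<..b} \<inter> space lborel = {path_ext T f a<..path_ext T f b}"
  proof (intro set_eqI iffI)
    fix x assume x: "x \<in> Qf -` {a<..b} \<inter> space lborel"
    have xin: "x \<in> {0<..f T}"
    proof (rule ccontr)
      assume "x \<notin> {0<..f T}"
      then have "Qf x = -\<infinity>" unfolding Qf_def by (rule if_not_P)
      then show False using x by simp
    qed
    then have "Qf x = Inf {t. x \<le> path_ext T f t}" by (simp add: Qf_def)
    then show "x \<in> {path_ext T f a<..path_ext T f b}"
      using x Q_le_iff[of x a] Q_le_iff[of x b] xin by (auto simp: not_le)
  next
    fix x assume x: "x \<in> {path_ext T f a<..path_ext T f b}"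
    then have xin: "x \<in> {0<..f T}" using pe_nonneg[of a] pe_le[of b] by auto
    then have "Qf x = Inf {t. x \<le> path_ext T f t}" by (simp add: Qf_def)
    then show "x \<in> Qf -` {a<..b} \<inter> space lborel"
      using x Q_le_iff[of x a] Q_le_iff[of x b] xin by (auto simp: not_le)
  qed
  have le: "path_ext T f a \<le> path_ext T f b" using ab by (rule pe_mono)
  show ?thesis
  proof -
    have m: "Qf \<in> measurable lborel borel"
      using Qf_meas by (simp add: measurable_cong_sets[OF sets_lborel refl])
    show ?thesis unfolding Nf_def by (subst emeasure_distr[OF m]) (use pre le in auto)
  qed
qed

lemma ls_sets: "sets (ls_measure T f) = sigma_sets UNIV ((\<lambda>(a, b). {a<..b}) ` {(a, b). a \<le> b})"
  unfolding ls_measure_def by (rule sets_extend_measure) auto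

lemma ls_sets_sub: "sets (ls_measure T f) \<subseteq> sets Nf"
proof -
  have "sigma_sets (space borel) ((\<lambda>(a, b). {a<..b::ereal}) ` {(a, b). a \<le> b}) \<subseteq> sets borel"
    by (intro sets.sigma_sets_subset) auto
  then show ?thesis unfolding ls_sets Nf_def by simp
qed

lemma ls_Ioc:
  assumes ab: "a \<le> b"
  shows "emeasure (ls_measure T f) {a<..b} = ennreal (path_ext T f b - path_ext T f a)"
proof (rule emeasure_extend_measure_Pair[OF ls_measure_def, where \<mu>' = "emeasure Nf"])
  show "positive (sets (ls_measure T f)) (emeasure Nf)" by (simp add: positive_def)
  show "countably_additive (sets (ls_measure T f)) (emeasure Nf)"
    unfolding countably_additive_def
  proof (intro allI impI)
    fix A :: "nat \<Rightarrow> ereal set"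
    assume "range A \<subseteq> sets (ls_measure T f)" "disjoint_family A"
    then show "(\<Sum>i. emeasure Nf (A i)) = emeasure Nf (\<Union> (range A))"
      using ls_sets_sub by (intro suminf_emeasure) auto
  qed
qed (use ab Nf_Ioc in auto)

lemma ls_int_formula:
  assumes th: "0 < \<theta>" "\<theta> \<le> T"
  shows "ls_int T f (\<lambda>t. indicator {\<theta>..} t * x) = x * (f T - left_lim T f \<theta>)"
proof -
  let ?M = "ls_measure T f"
  let ?L = "left_lim T f \<theta>"
  obtain s where s: "incseq s" "\<And>k. 0 \<le> s k" "\<And>k. s k < \<theta>" "s \<longlonglongrightarrow> \<theta>"
    using ex_seq_left[OF th(1)] by blast
  have Ioc_sets: "{a<..b} \<in> sets ?M" for a b :: ereal
  proof (cases "a \<le> b")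
    case True then show ?thesis unfolding ls_sets by (intro sigma_sets.Basic) auto
  next
    case False then have "{a<..b} = {}" by auto
    then show ?thesis by simp
  qed
  define A where "A k = {s k<..T}" for k
  have sT: "s k \<le> T" for k using s(3)[of k] th(2) by simp
  have rA: "range A \<subseteq> sets ?M" unfolding A_def using Ioc_sets by auto
  have dA: "decseq A" unfolding decseq_def
  proof (intro allI impI subsetI)
    fix m n x assume "m \<le> n" "x \<in> A n"
    then have h: "s m \<le> s n" "s n < x" "x \<le> T" using s(1) unfolding incseq_def A_def by auto
    from h(1,2) have "s m < x" by (rule le_less_trans)
    then show "x \<in> A m" using \<open>x \<le> T\<close> unfolding A_def by simp
  qed
  have eA: "emeasure ?M (A k) = ennreal (f T - f (s k))" for k
    unfolding A_def using ls_Ioc[OF sT[of k]] pe_eq[of T] pe_eq[OF s(2)[of k] sT[of k]] T0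
    by simp
  have IA: "(\<Inter>k. A k) = {\<theta>..T}"
  proof (intro set_eqI iffI)
    fix t assume "t \<in> (\<Inter>k. A k)"
    then have t: "\<And>k. s k < t" "t \<le> T" unfolding A_def by auto
    have "\<theta> \<le> t"
    proof (rule ccontr)
      assume "\<not> \<theta> \<le> t"
      then have "t < \<theta>" by simp
      then have "eventually (\<lambda>k. t < s k) sequentially" using order_tendstoD(1)[OF s(4)] by blast
      then obtain k where "t < s k" by (meson eventually_sequentially order_refl)
      then show False using t(1)[of k] by simp
    qed
    then show "t \<in> {\<theta>..T}" using t by simp
  next
    fix t assume t: "t \<in> {\<theta>..T}"
    have "s k < t" for k using s(3)[of k] t by (simp add: less_le_trans)
    then show "t \<in> (\<Inter>k. A k)" unfolding A_def using t by simp
  qed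
  have lim1: "(\<lambda>k. emeasure ?M (A k)) \<longlonglongrightarrow> emeasure ?M {\<theta>..T}"
    using Lim_emeasure_decseq[OF rA dA] eA IA by simp
  have "\<forall>k. s k \<in> {..<\<theta>} \<and> s k \<noteq> \<theta>" using s(3) by (simp add: less_imp_neq)
  then have "filterlim s (at_left \<theta>) sequentially"
    unfolding filterlim_at using s(4) by (simp add: always_eventually)
  then have "(\<lambda>k. path_ext T f (s k)) \<longlonglongrightarrow> ?L"
    using filterlim_compose[OF ll_tendsto[OF th]] by blast
  then have "(\<lambda>k. f (s k)) \<longlonglongrightarrow> ?L"
    using pe_eq[OF s(2) sT] by simp
  then have "(\<lambda>k. ennreal (f T - f (s k))) \<longlonglongrightarrow> ennreal (f T - ?L)"
    by (intro tendsto_intros)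
  moreover have "(\<lambda>k. ennreal (f T - f (s k))) \<longlonglongrightarrow> emeasure ?M {\<theta>..T}"
    using lim1 eA by simp
  ultimately have em: "emeasure ?M {\<theta>..T} = ennreal (f T - ?L)"
    by (rule LIMSEQ_unique[rotated])
  have "f \<theta> \<le> f T" using gp_leT[of \<theta>] th by (simp add: less_imp_le)
  with ll_le[OF th] have LfT: "?L \<le> f T" by (rule order_trans)
  have "(\<Inter>k. A k) \<in> sets ?M" by (rule sets.countable_INT) (use rA in auto)
  then have Ts: "{\<theta>..T} \<in> sets ?M" using IA by simp
  have spM: "space ?M = UNIV" unfolding ls_measure_def by (rule space_extend_measure) auto
  have meas: "measure ?M {\<theta>..T} = f T - ?L"
    unfolding measure_def em using LfT by simp
  have eq: "(\<lambda>t. indicator {0..T} t * (indicator {\<theta>..} t * x)) = (\<lambda>t. x * indicator {\<theta>..T} t)"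
  proof
    fix t :: ereal
    have "t \<in> {0..T} \<and> t \<in> {\<theta>..} \<longleftrightarrow> t \<in> {\<theta>..T}"
      using order_trans[OF less_imp_le[OF th(1)], of t] by auto
    then show "indicator {0..T} t * (indicator {\<theta>..} t * x) = x * (indicator {\<theta>..T} t :: real)"
      by (auto simp: indicator_def)
  qed
  show ?thesis unfolding ls_int_def eq integral_mult_right_zero integral_indicator by (simp add: spM meas)
qed
lemma ll_sup:
  assumes th: "0 < \<theta>" "\<theta> \<le> T"
  shows "ereal (left_lim T f \<theta>) =
    (SUP q\<in>{q\<in>\<rat>. 0 \<le> q}. (if ereal q < \<theta> then ereal (f (min (ereal q) T)) else 0))"
    (is "_ = ?S")
proof (rule antisym)
  let ?L = "left_lim T f \<theta>"
  show "?S \<le> ereal ?L"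
  proof (rule SUP_least)
    fix q :: real assume q: "q \<in> {q\<in>\<rat>. 0 \<le> q}"
    show "(if ereal q < \<theta> then ereal (f (min (ereal q) T)) else 0) \<le> ereal ?L"
    proof (cases "ereal q < \<theta>")
      case True
      then have "ereal q \<le> T" using th(2) by (simp add: less_imp_le order_less_le_trans)
      then have "min (ereal q) T = ereal q" by simp
      moreover have "f (ereal q) \<le> ?L" using ll_ge[OF th, of "ereal q"] q True by simp
      ultimately show ?thesis using True by simp
    next
      case False then show ?thesis using ll_nonneg[OF th] by simp
    qed
  qed
  show "ereal ?L \<le> ?S"
  proof (rule dense_le)
    fix c assume c: "c < ereal ?L"
    have "((\<lambda>s. ereal (path_ext T f s)) \<longlongrightarrow> ereal ?L) (at_left \<theta>)"
      using ll_tendsto[OF th] by (rule tendsto_ereal)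
    then have e1: "eventually (\<lambda>s. c < ereal (path_ext T f s)) (at_left \<theta>)"
      using order_tendstoD(1) c by blast
    have e2: "eventually (\<lambda>s. 0 < s) (at_left \<theta>)"
      by (rule eventually_at_leftI[of 0 \<theta>]) (use th in auto)
    have "eventually (\<lambda>s. c < ereal (path_ext T f s) \<and> 0 < s \<and> s < \<theta>) (at_left \<theta>)"
      using e1 e2 ev_left_lt by eventually_elim auto
    then obtain s where s: "c < ereal (path_ext T f s)" "0 < s" "s < \<theta>"
      using eventually_happens[of _ "at_left \<theta>"] at_left_ereal_nontriv[OF th(1)] by blast
    obtain r where r: "s = ereal r" using s by (cases s) auto
    obtain q :: real where q: "q \<in> \<rat>" "r < q" "ereal q < \<theta>"
    proof (cases \<theta>)
      case (real t)
      then obtain q where "q \<in> \<rat>" "r < q" "q < t" using Rats_dense_in_real[of r t] s r by auto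
      then show ?thesis using that real by auto
    next
      case PInf
      then obtain q where "q \<in> \<rat>" "r < q" "q < r + 1" using Rats_dense_in_real[of r "r+1"] by auto
      then show ?thesis using that PInf by auto
    qed (use th in auto)
    have rT: "ereal q \<le> T" using q(3) th(2) by (simp add: less_imp_le order_less_le_trans)
    have r0: "0 \<le> r" using s r by simp
    have "path_ext T f s = f s" using s th by (intro pe_eq) (auto simp: less_imp_le order_less_le_trans)
    also have "\<dots> \<le> f (ereal q)"
    proof -
      have "ereal r \<le> ereal q" using q(2) by simp
      then have "ereal r \<le> T" using rT by (rule order_trans)
      then show ?thesis using r r0 q rT by (intro gp_mono) auto
    qed
    finally have "ereal (path_ext T f s) \<le> ereal (f (ereal q))" by simp
    then have "c < ereal (f (ereal q))" using s(1) by (rule order_less_le_trans[rotated])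
    then have "c < ereal (f (min (ereal q) T))" using rT by (simp add: min_absorb1)
    also have "\<dots> = (if ereal q < \<theta> then ereal (f (min (ereal q) T)) else 0)" using q by simp
    also have "\<dots> \<le> ?S" using q r0 by (intro SUP_upper) auto
    finally show "c \<le> ?S" by simp
  qed
qed

end
lemma exists_cont_point:
  fixes f :: "ereal \<Rightarrow> real"
  assumes gp: "goodpath T f" and T0: "0 < T" and b: "b < \<theta>" and th: "0 < \<theta>" "\<theta> \<le> T"
  shows "\<exists>x. ereal x \<in> cont_points T f \<and> b < ereal x \<and> ereal x < \<theta> \<and> 0 < x"
proof -
  define b' where "b' = max b 0"
  have b'th: "b' < \<theta>" "0 \<le> b'" using b th by (auto simp: b'_def)
  obtain lo where lo: "b' = ereal lo" using b'th by (cases b') auto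
  define hi where "hi = (if \<theta> = \<infinity> then lo + 1 else real_of_ereal \<theta>)"
  have lohi: "lo < hi" using b'th lo by (cases \<theta>) (auto simp: hi_def)
  have inA: "b' < ereal x \<and> ereal x < \<theta>" if "x \<in> {lo<..<hi}" for x
    using that lo th by (cases \<theta>) (auto simp: hi_def)
  define h where "h x = f (ereal x)" for x
  have xT: "ereal x \<in> {0..T}" if "x \<in> {lo<..<hi}" for x
  proof -
    have "0 \<le> ereal x" using inA[OF that] b'th(2) by (meson less_imp_le order_trans)
    moreover have "ereal x \<le> T" using inA[OF that] th(2) by (meson less_imp_le order_trans)
    ultimately show ?thesis by simp
  qed
  have "mono_on {lo<..<hi} h"
    unfolding mono_on_def h_def using xT by (auto intro!: gp_mono[OF gp T0])
  then have "countable {a \<in> {lo<..<hi}. \<not> isCont h a}"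
    by (intro mono_on_ctble_discont_open) auto
  moreover have "uncountable {lo<..<hi}" using lohi by (simp add: uncountable_open_interval)
  ultimately obtain x where x: "x \<in> {lo<..<hi}" "isCont h x"
    by (metis (mono_tags, lifting) countable_subset mem_Collect_eq subsetI)
  have x0: "0 < x" using inA[OF x(1)] b'th(2) lo x(1) by simp
  have xth: "0 < ereal x" "ereal x \<le> T" using x0 xT[OF x(1)] by auto
  have "left_lim T f (ereal x) = f (ereal x)"
  proof (rule antisym)
    show "left_lim T f (ereal x) \<le> f (ereal x)" by (rule ll_le[OF gp T0 xth])
    have "(\<lambda>k. x - 1 / real (Suc k)) \<longlonglongrightarrow> x - 0"
      by (intro tendsto_intros) (use LIMSEQ_inverse_real_of_nat in \<open>simp add: divide_inverse\<close>)
    then have lim: "(\<lambda>k. x - 1 / real (Suc k)) \<longlonglongrightarrow> x" by simp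
    then have "eventually (\<lambda>k. 0 < x - 1 / real (Suc k)) sequentially"
      using order_tendstoD(1)[OF lim x0] by simp
    then obtain N where N: "\<And>k. k \<ge> N \<Longrightarrow> 0 < x - 1 / real (Suc k)"
      unfolding eventually_sequentially by blast
    have "(\<lambda>k. h (x - 1 / real (Suc k))) \<longlonglongrightarrow> h x"
      using isCont_tendsto_compose[OF x(2) lim] .
    moreover have "\<exists>N. \<forall>k\<ge>N. h (x - 1 / real (Suc k)) \<le> left_lim T f (ereal x)"
    proof (intro exI allI impI)
      fix k assume "N \<le> k"
      then have "0 \<le> ereal (x - 1 / real (Suc k))" "ereal (x - 1 / real (Suc k)) < ereal x"
        using N[of k] by auto
      then show "h (x - 1 / real (Suc k)) \<le> left_lim T f (ereal x)"
        unfolding h_def by (rule ll_ge[OF gp T0 xth])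
    qed
    ultimately have "h x \<le> left_lim T f (ereal x)" by (rule LIMSEQ_le_const2)
    then show "f (ereal x) \<le> left_lim T f (ereal x)" by (simp add: h_def)
  qed
  then have "ereal x \<in> cont_points T f" unfolding cont_points_def using xT[OF x(1)] by simp
  moreover have "b < ereal x" using inA[OF x(1)] by (auto simp: b'_def)
  ultimately show ?thesis using inA[OF x(1)] x0 by blast
qed

lemma liminf_ll:
  fixes f :: "ereal \<Rightarrow> real" and fn :: "nat \<Rightarrow> ereal \<Rightarrow> real"
  assumes T0: "0 < T" and gpn: "\<And>n. n \<ge> 1 \<Longrightarrow> goodpath T (fn n)" and gp: "goodpath T f"
    and conv: "\<forall>t\<in>cont_points T f \<union> {T}. (\<lambda>n. fn n t) \<longlonglongrightarrow> f t"
    and th: "0 < \<theta>" "\<theta> \<le> T" and c: "c < left_lim T f \<theta>"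
  shows "eventually (\<lambda>n. c < left_lim T (fn n) \<theta>) sequentially"
proof -
  have "eventually (\<lambda>s. c < path_ext T f s) (at_left \<theta>)"
    using order_tendstoD(1)[OF ll_tendsto[OF gp T0 th] c] .
  then obtain b where b: "b < \<theta>" "\<And>y. b < y \<Longrightarrow> y < \<theta> \<Longrightarrow> c < path_ext T f y"
    unfolding eventually_at_left[OF th(1)] by blast
  obtain x where x: "ereal x \<in> cont_points T f" "b < ereal x" "ereal x < \<theta>" "0 < x"
    using exists_cont_point[OF gp T0 b(1) th] by blast
  have x0: "0 \<le> ereal x" using x(4) by simp
  have xT: "ereal x \<le> T" using x(3) th(2) by (simp add: less_imp_le order_less_le_trans)
  have "c < f (ereal x)" using b(2)[OF x(2,3)] pe_eq[OF gp T0 x0 xT] by simp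
  moreover have "(\<lambda>n. fn n (ereal x)) \<longlonglongrightarrow> f (ereal x)" using conv x(1) by blast
  ultimately have "eventually (\<lambda>n. c < fn n (ereal x)) sequentially"
    using order_tendstoD(1) by blast
  moreover have "eventually (\<lambda>n. n \<ge> 1) sequentially" by (rule eventually_ge_at_top)
  ultimately show ?thesis
  proof eventually_elim
    case (elim n)
    then have "fn n (ereal x) \<le> left_lim T (fn n) \<theta>"
      using ll_ge[OF gpn[OF elim(2)] T0 th x0 x(3)] by simp
    then show ?case using elim(1) by simp
  qed
qed

lemma lim_ll:
  fixes f :: "ereal \<Rightarrow> real" and fn :: "nat \<Rightarrow> ereal \<Rightarrow> real"
  assumes T0: "0 < T" and gpn: "\<And>n. n \<ge> 1 \<Longrightarrow> goodpath T (fn n)" and gp: "goodpath T f"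
    and conv: "\<forall>t\<in>cont_points T f \<union> {T}. (\<lambda>n. fn n t) \<longlonglongrightarrow> f t"
    and th: "0 < \<theta>" "\<theta> \<le> T" and cp: "\<theta> \<in> cont_points T f"
  shows "(\<lambda>n. left_lim T (fn n) \<theta>) \<longlonglongrightarrow> left_lim T f \<theta>"
proof (rule order_tendstoI)
  fix c assume "c < left_lim T f \<theta>"
  then show "eventually (\<lambda>n. c < left_lim T (fn n) \<theta>) sequentially"
    using liminf_ll[OF T0 gpn gp conv th, of c] by blast
next
  fix c assume c: "left_lim T f \<theta> < c"
  have "left_lim T f \<theta> = f \<theta>" using cp unfolding cont_points_def by simp
  moreover have "(\<lambda>n. fn n \<theta>) \<longlonglongrightarrow> f \<theta>" using conv cp by blast
  ultimately have "eventually (\<lambda>n. fn n \<theta> < c) sequentially"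
    using order_tendstoD(2) c by metis
  moreover have "eventually (\<lambda>n. n \<ge> 1) sequentially" by (rule eventually_ge_at_top)
  ultimately show "eventually (\<lambda>n. left_lim T (fn n) \<theta> < c) sequentially"
  proof eventually_elim
    case (elim n)
    then show ?case using ll_le[OF gpn[OF elim(2)] T0 th] by simp
  qed
qed

lemma meas_path:
  assumes "A_circ M T G r" "filtration_on M T G" "t \<in> {0..T}"
  shows "r t \<in> borel_measurable M"
proof (rule measurable_from_subalg)
  show "subalgebra M (G t)" using assms(2,3) unfolding filtration_on_def subalgebra_def by auto
  show "r t \<in> borel_measurable (G t)" using assms(1,3) unfolding A_circ_def by auto
qed

lemma LL_meas:
  assumes A: "A_circ M T G r" and filt: "filtration_on M T G" and T0: "0 < T"
    and thmeas: "\<theta> \<in> borel_measurable M" and thr: "\<forall>\<omega>\<in>space M. 0 < \<theta> \<omega> \<and> \<theta> \<omega> \<le> T"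
  shows "(\<lambda>\<omega>. left_lim T (\<lambda>s. r s \<omega>) (\<theta> \<omega>)) \<in> borel_measurable M"
proof -
  let ?Q = "{q\<in>\<rat>. 0 \<le> (q::real)}"
  let ?F = "\<lambda>q \<omega>. (if ereal q < \<theta> \<omega> then ereal (r (min (ereal q) T) \<omega>) else 0)"
  have cQ: "countable ?Q" by (rule countable_subset[OF _ countable_rat]) auto
  have Fm: "?F q \<in> borel_measurable M" if q: "q \<in> ?Q" for q
  proof (rule measurable_If)
    have "min (ereal q) T \<in> {0..T}" using q T0 by (auto simp: less_imp_le)
    then have "r (min (ereal q) T) \<in> borel_measurable M" by (rule meas_path[OF A filt])
    then show "(\<lambda>\<omega>. ereal (r (min (ereal q) T) \<omega>)) \<in> borel_measurable M" by measurable
    show "(\<lambda>\<omega>. 0::ereal) \<in> borel_measurable M" by simp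
    show "{\<omega> \<in> space M. ereal q < \<theta> \<omega>} \<in> sets M" using thmeas by measurable
  qed
  have "(\<lambda>\<omega>. real_of_ereal (SUP q\<in>?Q. ?F q \<omega>)) \<in> borel_measurable M"
    using borel_measurable_SUP[OF cQ Fm] by measurable
  moreover have "left_lim T (\<lambda>s. r s \<omega>) (\<theta> \<omega>) = real_of_ereal (SUP q\<in>?Q. ?F q \<omega>)"
    if "\<omega> \<in> space M" for \<omega>
  proof -
    have gp: "goodpath T (\<lambda>s. r s \<omega>)" using A by (rule A_circ_goodpath)
    have "ereal (left_lim T (\<lambda>s. r s \<omega>) (\<theta> \<omega>)) = (SUP q\<in>?Q. ?F q \<omega>)"
      using ll_sup[OF gp T0, of "\<theta> \<omega>"] thr that by simp
    then show ?thesis by (metis real_of_ereal.simps(1))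
  qed
  ultimately show ?thesis using measurable_cong by (smt (verit, del_insts))
qed

theorem mainTheorem18:
  fixes M :: "'a measure" and T :: ereal
    and F G :: "ereal \<Rightarrow> 'a measure"
    and \<rho>n :: "nat \<Rightarrow> ereal \<Rightarrow> 'a \<Rightarrow> real" and \<rho> :: "ereal \<Rightarrow> 'a \<Rightarrow> real"
    and \<theta> :: "'a \<Rightarrow> ereal" and X :: "'a \<Rightarrow> real"
  assumes P: "prob_space M"
    and complete: "\<And>A N. N \<in> null_sets M \<Longrightarrow> A \<subseteq> N \<Longrightarrow> A \<in> sets M"
    and T: "0 < T"
    and filtF: "filtration_on M T F"
    and filtG: "filtration_on M T G"
    and GF: "\<forall>t\<in>{0..T}. sets (G t) \<subseteq> sets (F t)"
    and rhon: "\<And>n. n \<ge> 1 \<Longrightarrow> A_circ M T G (\<rho>n n)"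
    and rho: "A_circ M T G \<rho>"
    and conv: "AE \<omega> in M. \<forall>t \<in> cont_points T (\<lambda>s. \<rho> s \<omega>) \<union> {T}.
                 (\<lambda>n. \<rho>n n t \<omega>) \<longlonglongrightarrow> \<rho> t \<omega>"
    and theta_meas: "\<theta> \<in> borel_measurable M"
    and theta_range: "\<forall>\<omega>\<in>space M. 0 < \<theta> \<omega> \<and> \<theta> \<omega> \<le> T"
    and X_meas: "X \<in> borel_measurable M"
    and X_nonneg: "\<forall>\<omega>\<in>space M. 0 \<le> X \<omega>"
    and X_int: "integrable M X"
  shows "(limsup (\<lambda>n. ereal (\<integral>\<omega>. ls_int T (\<lambda>t. \<rho>n n t \<omega>) (\<lambda>t. indicator {\<theta> \<omega>..} t * X \<omega>) \<partial>M))
           \<le> ereal (\<integral>\<omega>. ls_int T (\<lambda>t. \<rho> t \<omega>) (\<lambda>t. indicator {\<theta> \<omega>..} t * X \<omega>) \<partial>M)) \<and>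
         ((AE \<omega> in M. \<theta> \<omega> \<in> cont_points T (\<lambda>s. \<rho> s \<omega>) \<or> X \<omega> = 0) \<longrightarrow>
         (\<lambda>n. \<integral>\<omega>. ls_int T (\<lambda>t. \<rho>n n t \<omega>) (\<lambda>t. indicator {\<theta> \<omega>..} t * X \<omega>) \<partial>M)
           \<longlonglongrightarrow> (\<integral>\<omega>. ls_int T (\<lambda>t. \<rho> t \<omega>) (\<lambda>t. indicator {\<theta> \<omega>..} t * X \<omega>) \<partial>M))"
proof -
  interpret prob_space M by (rule P)
  have gp: "goodpath T (\<lambda>s. \<rho> s \<omega>)" for \<omega> using rho by (rule A_circ_goodpath)
  have gpn: "goodpath T (\<lambda>s. \<rho>n n s \<omega>)" if "n \<ge> 1" for n \<omega> using rhon[OF that] by (rule A_circ_goodpath)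
  have T0T: "T \<in> {0..T}" using T by (simp add: less_imp_le)
  define LL where "LL \<omega> = left_lim T (\<lambda>s. \<rho> s \<omega>) (\<theta> \<omega>)" for \<omega>
  define LLn where "LLn n \<omega> = left_lim T (\<lambda>s. \<rho>n n s \<omega>) (\<theta> \<omega>)" for n \<omega>
  define D where "D \<omega> = \<rho> T \<omega> - LL \<omega>" for \<omega>
  define Dn where "Dn n \<omega> = \<rho>n n T \<omega> - LLn n \<omega>" for n \<omega>
  define Y where "Y \<omega> = X \<omega> * D \<omega>" for \<omega>
  define Yn where "Yn n \<omega> = X \<omega> * Dn n \<omega>" for n \<omega>
  define W where "W n \<omega> = X \<omega> * max (Dn n \<omega>) (D \<omega>)" for n \<omega>
  have th: "0 < \<theta> \<omega>" "\<theta> \<omega> \<le> T" if "\<omega> \<in> space M" for \<omega> using theta_range that by auto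
  have LLm: "LL \<in> borel_measurable M" unfolding LL_def by (rule LL_meas[OF rho filtG T theta_meas theta_range])
  have LLnm: "LLn n \<in> borel_measurable M" if "n \<ge> 1" for n
    unfolding LLn_def by (rule LL_meas[OF rhon[OF that] filtG T theta_meas theta_range])
  have Dm: "D \<in> borel_measurable M" unfolding D_def using meas_path[OF rho filtG T0T] LLm by measurable
  have Dnm: "Dn n \<in> borel_measurable M" if "n \<ge> 1" for n
    unfolding Dn_def using meas_path[OF rhon[OF that] filtG T0T] LLnm[OF that] by measurable
  have Ym: "Y \<in> borel_measurable M" unfolding Y_def using X_meas Dm by measurable
  have Ynm: "Yn n \<in> borel_measurable M" if "n \<ge> 1" for n unfolding Yn_def using X_meas Dnm[OF that] by measurable
  have Wm: "W n \<in> borel_measurable M" if "n \<ge> 1" for n unfolding W_def using X_meas Dm Dnm[OF that] by measurable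
  have Db: "0 \<le> D \<omega> \<and> D \<omega> \<le> 1" if "\<omega> \<in> space M" for \<omega>
  proof -
    have "LL \<omega> \<le> \<rho> (\<theta> \<omega>) \<omega>" unfolding LL_def by (rule ll_le[OF gp T th[OF that]])
    moreover have "\<rho> (\<theta> \<omega>) \<omega> \<le> \<rho> T \<omega>" using gp_leT[OF gp T, of "\<theta> \<omega>"] th[OF that] by (simp add: less_imp_le)
    moreover have "0 \<le> LL \<omega>" unfolding LL_def by (rule ll_nonneg[OF gp T th[OF that]])
    moreover have "\<rho> T \<omega> \<le> 1" by (rule gp_T1[OF gp T])
    ultimately show ?thesis unfolding D_def by simp
  qed
  have Dnb: "0 \<le> Dn n \<omega> \<and> Dn n \<omega> \<le> 1" if "\<omega> \<in> space M" "n \<ge> 1" for \<omega> n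
  proof -
    note g = gpn[OF that(2)]
    have "LLn n \<omega> \<le> \<rho>n n (\<theta> \<omega>) \<omega>" unfolding LLn_def by (rule ll_le[OF g T th[OF that(1)]])
    moreover have "\<rho>n n (\<theta> \<omega>) \<omega> \<le> \<rho>n n T \<omega>" using gp_leT[OF g T, of "\<theta> \<omega>"] th[OF that(1)] by (simp add: less_imp_le)
    moreover have "0 \<le> LLn n \<omega>" unfolding LLn_def by (rule ll_nonneg[OF g T th[OF that(1)]])
    moreover have "\<rho>n n T \<omega> \<le> 1" by (rule gp_T1[OF g T])
    ultimately show ?thesis unfolding Dn_def by simp
  qed
  have Xn: "norm (X \<omega>) = X \<omega>" if "\<omega> \<in> space M" for \<omega> using X_nonneg that by simp
  have intY: "(\<integral>\<omega>. ls_int T (\<lambda>t. \<rho> t \<omega>) (\<lambda>t. indicator {\<theta> \<omega>..} t * X \<omega>) \<partial>M) = integral\<^sup>L M Y"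
    by (rule Bochner_Integration.integral_cong[OF refl]) (simp add: Y_def D_def LL_def ls_int_formula[OF gp T th])
  have intYn: "(\<integral>\<omega>. ls_int T (\<lambda>t. \<rho>n n t \<omega>) (\<lambda>t. indicator {\<theta> \<omega>..} t * X \<omega>) \<partial>M) = integral\<^sup>L M (Yn n)"
    if "n \<ge> 1" for n
    by (rule Bochner_Integration.integral_cong[OF refl]) (simp add: Yn_def Dn_def LLn_def ls_int_formula[OF gpn[OF that] T th])
  have conv': "AE \<omega> in M. \<forall>t \<in> cont_points T (\<lambda>s. \<rho> s \<omega>) \<union> {T}. (\<lambda>n. \<rho>n n t \<omega>) \<longlonglongrightarrow> \<rho> t \<omega>"
    by (rule conv)
  have limT: "(\<lambda>n. \<rho>n n T \<omega>) \<longlonglongrightarrow> \<rho> T \<omega>"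
    if "\<forall>t \<in> cont_points T (\<lambda>s. \<rho> s \<omega>) \<union> {T}. (\<lambda>n. \<rho>n n t \<omega>) \<longlonglongrightarrow> \<rho> t \<omega>" for \<omega>
    using that by blast
  have gpn': "goodpath T ((\<lambda>n s. \<rho>n n s \<omega>) n)" if "n \<ge> 1" for n \<omega> using gpn[OF that] by simp
  have Wlim: "AE \<omega> in M. (\<lambda>n. W n \<omega>) \<longlonglongrightarrow> Y \<omega>"
    using conv' AE_space
  proof eventually_elim
    case (elim \<omega>)
    have cD: "(\<lambda>n. max (Dn n \<omega>) (D \<omega>)) \<longlonglongrightarrow> D \<omega>"
    proof (rule order_tendstoI)
      fix c assume "c < D \<omega>"
      then show "eventually (\<lambda>n. c < max (Dn n \<omega>) (D \<omega>)) sequentially"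
        by (intro always_eventually) (auto simp: less_max_iff_disj)
    next
      fix c assume c: "D \<omega> < c"
      define e where "e = (c - D \<omega>) / 2"
      have e0: "0 < e" using c by (simp add: e_def)
      have "eventually (\<lambda>n. \<rho>n n T \<omega> < \<rho> T \<omega> + e) sequentially"
        using order_tendstoD(2)[OF limT[OF elim(1)]] e0 by simp
      moreover have "eventually (\<lambda>n. LL \<omega> - e < LLn n \<omega>) sequentially"
        using liminf_ll[where fn = "\<lambda>n s. \<rho>n n s \<omega>" and f = "\<lambda>s. \<rho> s \<omega>",
            OF T gpn' gp elim(1) th[OF elim(2)], of "LL \<omega> - e"] e0
        by (simp add: LL_def LLn_def)
      ultimately show "eventually (\<lambda>n. max (Dn n \<omega>) (D \<omega>) < c) sequentially"
      proof eventually_elim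
        case (elim n)
        then show ?case using c unfolding Dn_def D_def e_def max_less_iff_conj
          by (intro conjI) (simp_all add: field_simps)
      qed
    qed
    then have "(\<lambda>n. X \<omega> * max (Dn n \<omega>) (D \<omega>)) \<longlonglongrightarrow> X \<omega> * D \<omega>" by (rule tendsto_mult_left)
    then show ?case by (simp add: W_def Y_def)
  qed
  have Wb: "AE \<omega> in M. norm (W (Suc i) \<omega>) \<le> X \<omega>" for i
  proof (rule AE_I2)
    fix \<omega> assume w: "\<omega> \<in> space M"
    have "0 \<le> max (Dn (Suc i) \<omega>) (D \<omega>)" "max (Dn (Suc i) \<omega>) (D \<omega>) \<le> 1"
      using Db[OF w] Dnb[OF w, of "Suc i"] by auto
    then show "norm (W (Suc i) \<omega>) \<le> X \<omega>"
      using X_nonneg w by (simp add: W_def abs_mult mult_left_le)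
  qed
  have Wint: "integrable M (W n)" if "n \<ge> 1" for n
  proof -
    have "Suc 0 \<le> n" using that by simp
    then obtain i where "n = Suc i" using Suc_le_D by blast
    note ni = this
    have "AE \<omega> in M. norm (W n \<omega>) \<le> norm (X \<omega>)"
      using Wb[of i] AE_space
    proof eventually_elim
      case (elim \<omega>) then show ?case using Xn[OF elim(2)] ni by simp
    qed
    then show ?thesis by (rule Bochner_Integration.integrable_bound[OF X_int Wm[OF that]])
  qed
  have WLim: "(\<lambda>i. integral\<^sup>L M (W (Suc i))) \<longlonglongrightarrow> integral\<^sup>L M Y"
  proof (rule integral_dominated_convergence[OF Ym _ X_int _ Wb])
    show "W (Suc i) \<in> borel_measurable M" for i using Wm[of "Suc i"] by simp
    show "AE x in M. (\<lambda>i. W (Suc i) x) \<longlonglongrightarrow> Y x"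
      using Wlim by eventually_elim (rule LIMSEQ_Suc)
  qed
  then have "(\<lambda>n. integral\<^sup>L M (W n)) \<longlonglongrightarrow> integral\<^sup>L M Y"
    by (rule LIMSEQ_imp_Suc[where f = "\<lambda>n. integral\<^sup>L M (W n)"])
  then have "(\<lambda>n. ereal (integral\<^sup>L M (W n))) \<longlonglongrightarrow> ereal (integral\<^sup>L M Y)"
    by (rule tendsto_ereal)
  then have lsW: "limsup (\<lambda>n. ereal (integral\<^sup>L M (W n))) = ereal (integral\<^sup>L M Y)"
    by (intro lim_imp_Limsup) simp_all
  have part1: "limsup (\<lambda>n. ereal (\<integral>\<omega>. ls_int T (\<lambda>t. \<rho>n n t \<omega>) (\<lambda>t. indicator {\<theta> \<omega>..} t * X \<omega>) \<partial>M))
           \<le> ereal (\<integral>\<omega>. ls_int T (\<lambda>t. \<rho> t \<omega>) (\<lambda>t. indicator {\<theta> \<omega>..} t * X \<omega>) \<partial>M)"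
  proof -
    have "limsup (\<lambda>n. ereal (\<integral>\<omega>. ls_int T (\<lambda>t. \<rho>n n t \<omega>) (\<lambda>t. indicator {\<theta> \<omega>..} t * X \<omega>) \<partial>M))
          \<le> limsup (\<lambda>n. ereal (integral\<^sup>L M (W n)))"
    proof (rule Limsup_mono)
      show "eventually (\<lambda>n. ereal (\<integral>\<omega>. ls_int T (\<lambda>t. \<rho>n n t \<omega>) (\<lambda>t. indicator {\<theta> \<omega>..} t * X \<omega>) \<partial>M)
              \<le> ereal (integral\<^sup>L M (W n))) sequentially"
        using eventually_ge_at_top[of 1]
      proof eventually_elim
        case (elim n)
        have "integral\<^sup>L M (Yn n) \<le> integral\<^sup>L M (W n)"
        proof (rule integral_mono'[OF Wint[OF elim]])
          fix \<omega> assume w: "\<omega> \<in> space M"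
          show "Yn n \<omega> \<le> W n \<omega>" unfolding Yn_def W_def using X_nonneg w
            by (intro mult_left_mono) auto
          show "0 \<le> W n \<omega>" unfolding W_def using X_nonneg w Db[OF w] by auto
        qed
        then show ?case using intYn[OF elim] by simp
      qed
    qed
    then show ?thesis using lsW intY by simp
  qed
  have part2: "(\<lambda>n. \<integral>\<omega>. ls_int T (\<lambda>t. \<rho>n n t \<omega>) (\<lambda>t. indicator {\<theta> \<omega>..} t * X \<omega>) \<partial>M)
           \<longlonglongrightarrow> (\<integral>\<omega>. ls_int T (\<lambda>t. \<rho> t \<omega>) (\<lambda>t. indicator {\<theta> \<omega>..} t * X \<omega>) \<partial>M)"
    if AEc: "AE \<omega> in M. \<theta> \<omega> \<in> cont_points T (\<lambda>s. \<rho> s \<omega>) \<or> X \<omega> = 0"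
  proof -
    have Ylim: "AE \<omega> in M. (\<lambda>n. Yn n \<omega>) \<longlonglongrightarrow> Y \<omega>"
      using conv' AEc AE_space
    proof eventually_elim
      case (elim \<omega>)
      show ?case
      proof (cases "X \<omega> = 0")
        case True then show ?thesis by (simp add: Yn_def Y_def)
      next
        case False
        then have cp: "\<theta> \<omega> \<in> cont_points T (\<lambda>s. \<rho> s \<omega>)" using elim(2) by simp
        have "(\<lambda>n. LLn n \<omega>) \<longlonglongrightarrow> LL \<omega>"
          using lim_ll[where fn = "\<lambda>n s. \<rho>n n s \<omega>" and f = "\<lambda>s. \<rho> s \<omega>",
            OF T gpn' gp elim(1) th[OF elim(3)] cp]
          by (simp add: LL_def LLn_def)
        then have "(\<lambda>n. Dn n \<omega>) \<longlonglongrightarrow> D \<omega>"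
          unfolding Dn_def D_def by (intro tendsto_diff limT[OF elim(1)])
        then show ?thesis unfolding Yn_def Y_def by (rule tendsto_mult_left)
      qed
    qed
    have Yb: "AE \<omega> in M. norm (Yn (Suc i) \<omega>) \<le> X \<omega>" for i
    proof (rule AE_I2)
      fix \<omega> assume w: "\<omega> \<in> space M"
      then show "norm (Yn (Suc i) \<omega>) \<le> X \<omega>"
        using X_nonneg w Dnb[OF w, of "Suc i"] by (simp add: Yn_def abs_mult mult_left_le)
    qed
    have "(\<lambda>i. integral\<^sup>L M (Yn (Suc i))) \<longlonglongrightarrow> integral\<^sup>L M Y"
    proof (rule integral_dominated_convergence[OF Ym _ X_int _ Yb])
      show "Yn (Suc i) \<in> borel_measurable M" for i using Ynm[of "Suc i"] by simp
      show "AE x in M. (\<lambda>i. Yn (Suc i) x) \<longlonglongrightarrow> Y x"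
        using Ylim by eventually_elim (rule LIMSEQ_Suc)
    qed
    then have "(\<lambda>n. integral\<^sup>L M (Yn n)) \<longlonglongrightarrow> integral\<^sup>L M Y"
      by (rule LIMSEQ_imp_Suc[where f = "\<lambda>n. integral\<^sup>L M (Yn n)"])
    moreover have "eventually (\<lambda>n. integral\<^sup>L M (Yn n) =
        (\<integral>\<omega>. ls_int T (\<lambda>t. \<rho>n n t \<omega>) (\<lambda>t. indicator {\<theta> \<omega>..} t * X \<omega>) \<partial>M)) sequentially"
      using eventually_ge_at_top[of 1] by eventually_elim (simp add: intYn)
    ultimately show ?thesis unfolding intY by (rule Lim_transform_eventually)
  qed
  show ?thesis using part1 part2 by blast
qed

end
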